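(* Let $\mathbf{S}$ be a real symmetric positive semidefinite $p\times p$ matrix and $\mathbf{T}$ a real symmetric positive definite $p\times p$ matrix, and for $\lambda_a\in(0,\infty)$ define $$\hat{\mathbf{\Omega}}^{\mathrm{I}a}(\lambda_a) = \Big\{\Big[\lambda_a\mathbf{I}_p + \tfrac14(\mathbf{S}-\lambda_a\mathbf{T})^2\Big]^{1/2} + \tfrac12(\mathbf{S}-\lambda_a\mathbf{T})\Big\}^{-1}.$$ Then: (i) $\hat{\mathbf{\Omega}}^{\mathrm{I}a}(\lambda_a)$ is well defined and positive definite for every $\lambda_a\in(0,\infty)$; (ii) if moreover $\mathbf{S}$ is positive definite, then $\lim_{\lambda_a\to 0^+}\hat{\mathbf{\Omega}}^{\mathrm{I}a}(\lambda_a) = \mathbf{S}^{-1}$; (iii) $\lim_{\lambda_a\to\infty}\hat{\mathbf{\Omega}}^{\mathrm{I}a}(\lambda_a) = \mathbf{T}$.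
   Context: $\mathbf{I}_p$ is the $p\times p$ identity; for a real symmetric positive definite matrix $\mathbf{H}$, $\mathbf{H}^{1/2}$ is its unique symmetric positive definite square root. *)

theory Defs
  imports "HOL-Analysis.Analysis"
begin

definition sym_mat :: "real^'n^'n \<Rightarrow> bool" where
  "sym_mat A \<longleftrightarrow> transpose A = A"

definition psd_mat :: "real^'n^'n \<Rightarrow> bool" where
  "psd_mat A \<longleftrightarrow> sym_mat A \<and> (\<forall>x. 0 \<le> x \<bullet> (A *v x))"

definition pd_mat :: "real^'n^'n \<Rightarrow> bool" where
  "pd_mat A \<longleftrightarrow> sym_mat A \<and> (\<forall>x. x \<noteq> 0 \<longrightarrow> 0 < x \<bullet> (A *v x))"

definition mat_sqrt :: "real^'n^'n \<Rightarrow> real^'n^'n" where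
  "mat_sqrt H = (THE R. pd_mat R \<and> R ** R = H)"

definition inner_mat :: "real^'n^'n \<Rightarrow> real^'n^'n \<Rightarrow> real \<Rightarrow> real^'n^'n" where
  "inner_mat S T l = l *\<^sub>R mat 1 + (1/4) *\<^sub>R ((S - l *\<^sub>R T) ** (S - l *\<^sub>R T))"

definition pre_omega :: "real^'n^'n \<Rightarrow> real^'n^'n \<Rightarrow> real \<Rightarrow> real^'n^'n" where
  "pre_omega S T l = mat_sqrt (inner_mat S T l) + (1/2) *\<^sub>R (S - l *\<^sub>R T)"

definition Omega_Ia :: "real^'n^'n \<Rightarrow> real^'n^'n \<Rightarrow> real \<Rightarrow> real^'n^'n" where
  "Omega_Ia S T l = matrix_inv (pre_omega S T l)"

end

theory Submission
  imports Defs
begin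

declare transpose_matrix_vector[simp del] vector_transpose_matrix[simp del]

lemma norm_sq_cart: "norm (v::real^'n)^2 = (\<Sum>i\<in>UNIV. (v$i)^2)"
  unfolding power2_norm_eq_inner inner_vec_def by (simp add: power2_eq_square)

lemma inner_mat_transpose: "(x::real^'n) \<bullet> (A *v y) = (transpose A *v x) \<bullet> y"
  by (simp add: dot_lmul_matrix transpose_matrix_vector)

lemma sym_inner: "sym_mat A \<Longrightarrow> (x::real^'n) \<bullet> (A *v y) = (A *v x) \<bullet> y"
  by (metis inner_mat_transpose sym_mat_def)

definition diag :: "('n \<Rightarrow> real) \<Rightarrow> real^'n^'n" where
  "diag g = (\<chi> i j. if i = j then g i else 0)"

definition fc :: "real^'n^'n \<Rightarrow> ('n \<Rightarrow> real) \<Rightarrow> real^'n^'n" where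
  "fc P g = P ** diag g ** transpose P"

lemma diag_mult: fixes g h :: "'n::finite \<Rightarrow> real" shows "diag g ** diag h = diag (\<lambda>i. g i * h i)"
proof -
  have "(\<Sum>k\<in>UNIV. (if i = k then g i else 0) * (if k = j then h k else 0))
      = (if i = j then g i * h i else 0)" for i j :: 'n
    by (cases "i = j") (auto simp: if_distrib if_distribR sum.delta cong: if_cong)
  then show ?thesis
    by (simp add: diag_def matrix_matrix_mult_def vec_eq_iff)
qed

lemma diag_vec: fixes g :: "'n::finite \<Rightarrow> real" shows "diag g *v x = (\<chi> i. g i * x $ i)"
proof -
  have "(\<Sum>k\<in>UNIV. (if i = k then g i else 0) * x $ k) = (\<Sum>k\<in>UNIV. if k = i then g i * x $ i else 0)" for i
    by (rule sum.cong) auto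
  then show ?thesis by (simp add: diag_def matrix_vector_mult_def vec_eq_iff)
qed

lemma diag_const: "diag (\<lambda>i. c) = c *\<^sub>R mat 1"
  by (simp add: diag_def mat_def vec_eq_iff)

lemma diag_add: "diag (\<lambda>i. g i + h i) = diag g + diag h"
  by (simp add: diag_def vec_eq_iff)
lemma diag_diff: "diag (\<lambda>i. g i - h i) = diag g - diag h"
  by (simp add: diag_def vec_eq_iff)
lemma diag_scale: "diag (\<lambda>i. c * g i) = c *\<^sub>R diag g"
  by (simp add: diag_def vec_eq_iff)

lemma matrix_scaleR_left: "(c *\<^sub>R A) ** (B::real^'n^'n) = c *\<^sub>R (A ** B)"
  by (simp add: matrix_matrix_mult_def vec_eq_iff sum_distrib_left algebra_simps)
lemma matrix_scaleR_right: "(A::real^'n^'n) ** (c *\<^sub>R B) = c *\<^sub>R (A ** B)"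
  by (simp add: matrix_matrix_mult_def vec_eq_iff sum_distrib_left algebra_simps)
lemma matrix_add_rdistrib': "((B + C) ** (A::real^'n^'n)) = (B ** A) + (C ** A)"
  by (simp add: matrix_matrix_mult_def vec_eq_iff sum.distrib algebra_simps)
lemma matrix_diff_rdistrib': "((B - C) ** (A::real^'n^'n)) = (B ** A) - (C ** A)"
  by (simp add: matrix_matrix_mult_def vec_eq_iff sum_subtractf algebra_simps)
lemma matrix_diff_ldistrib': "((A::real^'n^'n) ** (B - C)) = (A ** B) - (A ** C)"
  by (simp add: matrix_matrix_mult_def vec_eq_iff sum_subtractf algebra_simps)

lemma fc_mult:
  assumes "transpose P ** P = mat 1"
  shows "fc P g ** fc P h = fc P (\<lambda>i. g i * h i)"
proof -
  have "fc P g ** fc P h = P ** (diag g ** (transpose P ** P) ** diag h) ** transpose P"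
    by (simp add: fc_def matrix_mul_assoc)
  also have "\<dots> = P ** (diag g ** diag h) ** transpose P"
    by (simp add: assms)
  also have "\<dots> = fc P (\<lambda>i. g i * h i)"
    by (simp add: fc_def diag_mult)
  finally show ?thesis .
qed

lemma fc_add: "fc P (\<lambda>i. g i + h i) = fc P g + fc P h"
  by (simp add: fc_def diag_add matrix_add_ldistrib matrix_add_rdistrib')
lemma fc_diff: "fc P (\<lambda>i. g i - h i) = fc P g - fc P h"
  by (simp add: fc_def diag_diff matrix_diff_ldistrib' matrix_diff_rdistrib')
lemma fc_scale: "fc P (\<lambda>i. c * g i) = c *\<^sub>R fc P g"
  by (simp add: fc_def diag_scale matrix_scaleR_left matrix_scaleR_right)
lemma fc_const: "P ** transpose P = mat 1 \<Longrightarrow> fc P (\<lambda>i. c) = c *\<^sub>R mat 1"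
  by (simp add: fc_def diag_const matrix_scaleR_left matrix_scaleR_right)

lemma fc_sym: "sym_mat (fc P g)"
proof -
  have "transpose (diag g) = diag g" by (simp add: diag_def transpose_def vec_eq_iff)
  then show ?thesis by (simp add: sym_mat_def fc_def matrix_transpose_mul matrix_mul_assoc)
qed

lemma fc_vec: "fc P g *v x = P *v (diag g *v (transpose P *v x))"
  by (simp add: fc_def matrix_vector_mul_assoc matrix_mul_assoc)

lemma orth_norm: "transpose P ** P = mat 1 \<Longrightarrow> norm (P *v (x::real^'n)) = norm x"
proof -
  assume a: "transpose P ** P = mat 1"
  have "(P *v x) \<bullet> (P *v x) = x \<bullet> x"
    by (metis a inner_mat_transpose matrix_vector_mul_assoc matrix_vector_mul_lid inner_commute)
  then show ?thesis by (simp add: norm_eq_sqrt_inner)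
qed

lemma inner_diag: "y \<bullet> (diag g *v y) = (\<Sum>i\<in>UNIV. g i * (y $ i)^2)"
  by (simp add: diag_vec inner_vec_def power2_eq_square algebra_simps)

lemma fc_quad: "x \<bullet> (fc P g *v x) = (\<Sum>i\<in>UNIV. g i * ((transpose P *v x) $ i)^2)"
  by (simp add: fc_vec inner_mat_transpose[of x P] inner_diag inner_commute)

lemma fc_lower:
  assumes "transpose P ** P = mat 1" "P ** transpose P = mat 1" "\<And>i. c \<le> g i"
  shows "c * (norm x)^2 \<le> x \<bullet> (fc P g *v x)"
proof -
  have n: "norm (transpose P *v x) = norm x"
    using orth_norm[of "transpose P" x] assms(2) by simp
  have "c * (norm x)^2 = c * (norm (transpose P *v x))^2" using n by simp
  also have "\<dots> = (\<Sum>i\<in>UNIV. c * ((transpose P *v x) $ i)^2)"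
    unfolding norm_sq_cart by (simp add: sum_distrib_left)
  also have "\<dots> \<le> (\<Sum>i\<in>UNIV. g i * ((transpose P *v x) $ i)^2)"
    by (rule sum_mono) (simp add: assms(3) mult_right_mono)
  finally show ?thesis by (simp add: fc_quad)
qed

lemma fc_pd: fixes P :: "real^'n::finite^'n"
  assumes "transpose P ** P = mat 1" "P ** transpose P = mat 1" "\<And>i. 0 < g i"
  shows "pd_mat (fc P g)"
  unfolding pd_mat_def
proof (intro conjI allI impI)
  show "sym_mat (fc P g)" by (rule fc_sym)
  fix x :: "real^'n" assume "x \<noteq> 0"
  define y where "y = transpose P *v x"
  have "P *v y = x" by (simp add: y_def matrix_vector_mul_assoc assms(2))
  then have "y \<noteq> 0" using \<open>x \<noteq> 0\<close> by auto
  then obtain j where j: "y $ j \<noteq> 0" by (metis vec_eq_iff zero_index)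
  have "0 < (\<Sum>i\<in>UNIV. g i * (y $ i)^2)"
  proof (rule sum_pos2[where i=j])
    show "0 < g j * (y $ j)^2" using j assms(3) by simp
    show "\<And>i. i \<in> UNIV \<Longrightarrow> 0 \<le> g i * (y $ i)^2" using assms(3) by (simp add: less_imp_le)
  qed auto
  then show "0 < x \<bullet> (fc P g *v x)" by (simp add: fc_quad y_def)
qed

lemma fc_bound:
  assumes "transpose P ** P = mat 1" "P ** transpose P = mat 1" "\<And>i. \<bar>g i\<bar> \<le> K"
  shows "norm (fc P g *v x) \<le> K * norm x"
proof -
  define y where "y = transpose P *v x"
  have ny: "norm y = norm x" using orth_norm[of "transpose P" x] assms(2) by (simp add: y_def)
  have K: "0 \<le> K" using assms(3) abs_ge_zero order_trans by blast
  have "norm (diag g *v y)^2 = (\<Sum>i\<in>UNIV. (g i * y $ i)^2)"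
    unfolding norm_sq_cart by (simp add: diag_vec)
  also have "\<dots> \<le> (\<Sum>i\<in>UNIV. K^2 * (y $ i)^2)"
    apply (rule sum_mono)
    apply (simp add: power_mult_distrib)
    apply (rule mult_right_mono)
    using assms(3) by (auto simp: abs_le_square_iff[symmetric] abs_le_iff K)
  also have "\<dots> = (K * norm y)^2"
    unfolding power_mult_distrib norm_sq_cart by (simp add: sum_distrib_left)
  finally have "norm (diag g *v y) \<le> K * norm y"
    using K by (simp add: power2_le_iff_abs_le)
  then show ?thesis by (simp add: fc_vec orth_norm[OF assms(1)] y_def[symmetric] ny)
qed

lemma quad_zero_aux:
  fixes a b :: real
  assumes "\<And>t. 2*t*a \<le> t^2*b"
  shows "a = 0"
proof (rule ccontr)
  assume "a \<noteq> 0"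
  define c where "c = \<bar>b\<bar> + 1"
  have c: "c > 0" "b < c" by (auto simp: c_def)
  have "2*(a/c)*a \<le> (a/c)^2*b" by (rule assms)
  then have "2*a^2*c \<le> a^2*b"
    using c by (simp add: field_simps power2_eq_square)
  moreover have "a^2 > 0" using \<open>a \<noteq> 0\<close> by simp
  ultimately have "2*c \<le> b" by (simp add: mult.commute mult.left_commute)
  then show False using c by linarith
qed

lemma eig_max:
  fixes A :: "real^'n::finite^'n"
  assumes sym: "sym_mat A" and V: "subspace V" and inv: "\<And>x. x \<in> V \<Longrightarrow> A *v x \<in> V"
    and ne: "v \<in> V" "v \<noteq> 0"
  shows "\<exists>u\<in>V. norm u = 1 \<and> (\<exists>\<mu>. A *v u = \<mu> *\<^sub>R u)"
proof -
  define K where "K = V \<inter> sphere 0 1"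
  have "compact K" unfolding K_def
    by (rule closed_Int_compact) (auto simp: V closed_subspace)
  moreover have "v /\<^sub>R norm v \<in> K" using ne V
    by (auto simp: K_def subspace_scale)
  then have "K \<noteq> {}" by auto
  moreover have "continuous_on K (\<lambda>x. x \<bullet> (A *v x))"
    by (intro continuous_intros linear_continuous_on matrix_vector_mul_bounded_linear)
  ultimately obtain u where u: "u \<in> K" and umax: "\<And>y. y \<in> K \<Longrightarrow> y \<bullet> (A *v y) \<le> u \<bullet> (A *v u)"
    using continuous_attains_sup[of K "\<lambda>x. x \<bullet> (A *v x)"] by blast
  have uV: "u \<in> V" and un: "norm u = 1" using u by (auto simp: K_def)
  have uu: "u \<bullet> u = 1" using un by (simp add: norm_eq_1)
  define \<mu> where "\<mu> = u \<bullet> (A *v u)"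
  have key: "w \<bullet> (A *v u) = 0" if wV: "w \<in> V" and wu: "w \<bullet> u = 0" for w
  proof (rule quad_zero_aux[where b = "\<mu> * (w \<bullet> w) - w \<bullet> (A *v w)"])
    fix t :: real
    define y where "y = u + t *\<^sub>R w"
    have yV: "y \<in> V" using uV wV V by (simp add: y_def subspace_add subspace_scale)
    have ny: "y \<bullet> y = 1 + t^2 * (w \<bullet> w)"
      using uu wu by (simp add: y_def inner_add_left inner_add_right inner_commute power2_eq_square)
    have "y \<bullet> y > 0" using ny by (simp add: add_pos_nonneg)
    then have "y \<noteq> 0" by auto
    then have "y /\<^sub>R norm y \<in> K" using yV V by (auto simp: K_def subspace_scale)
    from umax[OF this] have "(y /\<^sub>R norm y) \<bullet> (A *v (y /\<^sub>R norm y)) \<le> \<mu>" by (simp add: \<mu>_def)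
    then have "(y \<bullet> (A *v y)) / (norm y)^2 \<le> \<mu>"
      by (simp add: matrix_vector_mult_scaleR power2_eq_square divide_inverse ac_simps)
    then have "y \<bullet> (A *v y) \<le> \<mu> * (y \<bullet> y)"
      using \<open>y \<bullet> y > 0\<close> by (simp add: power2_norm_eq_inner divide_le_eq)
    moreover have "y \<bullet> (A *v y) = \<mu> + 2*t*(w \<bullet> (A *v u)) + t^2 * (w \<bullet> (A *v w))"
    proof -
      have "u \<bullet> (A *v w) = w \<bullet> (A *v u)" using sym_inner[OF sym, of u w] by (simp add: inner_commute)
      then show ?thesis
        by (simp add: y_def \<mu>_def matrix_vector_right_distrib matrix_vector_mult_scaleR inner_add_left inner_add_right power2_eq_square algebra_simps)
    qed
    ultimately show "2*t*(w \<bullet> (A *v u)) \<le> t^2 * (\<mu> * (w \<bullet> w) - w \<bullet> (A *v w))"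
      using ny by (simp add: algebra_simps)
  qed
  define z where "z = A *v u - \<mu> *\<^sub>R u"
  have zV: "z \<in> V" using V uV inv by (simp add: z_def subspace_diff subspace_scale)
  have zu: "z \<bullet> u = 0" using uu by (simp add: z_def \<mu>_def inner_diff_left inner_diff_right inner_commute)
  have "z \<bullet> z = z \<bullet> (A *v u) - \<mu> * (z \<bullet> u)" by (simp add: z_def inner_diff_right)
  also have "\<dots> = 0" using key[OF zV zu] zu by simp
  finally have "z = 0" by simp
  then show ?thesis using uV un by (auto simp: z_def intro!: exI[of _ \<mu>])
qed

definition oes :: "real^'n^'n \<Rightarrow> (real^'n) set \<Rightarrow> bool" where
  "oes A B \<longleftrightarrow> finite B \<and> (\<forall>b\<in>B. norm b = 1 \<and> (\<exists>\<mu>. A *v b = \<mu> *\<^sub>R b))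
     \<and> (\<forall>b\<in>B. \<forall>b'\<in>B. b \<noteq> b' \<longrightarrow> b \<bullet> b' = 0)"

lemma eig_ext:
  fixes A :: "real^'n::finite^'n"
  assumes sym: "sym_mat A" and B: "oes A B" and cB: "card B < CARD('n)"
  shows "\<exists>u. norm u = 1 \<and> (\<exists>\<mu>. A *v u = \<mu> *\<^sub>R u) \<and> (\<forall>b\<in>B. u \<bullet> b = 0)"
proof -
  define V where "V = {x. \<forall>b\<in>B. x \<bullet> b = 0}"
  have fin: "finite B" using B by (simp add: oes_def)
  have V: "subspace V" by (auto simp: subspace_def V_def inner_add_left)
  have inv: "A *v x \<in> V" if "x \<in> V" for x
  proof -
    have "(A *v x) \<bullet> b = 0" if b: "b \<in> B" for b
    proof -
      obtain \<mu> where "A *v b = \<mu> *\<^sub>R b" using B b unfolding oes_def by blast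
      then have "(A *v x) \<bullet> b = \<mu> * (x \<bullet> b)" using sym_inner[OF sym, of x b] by simp
      then show ?thesis using \<open>x \<in> V\<close> b by (simp add: V_def)
    qed
    then show ?thesis by (simp add: V_def)
  qed
  have "span B \<noteq> UNIV"
  proof
    assume "span B = UNIV"
    then have "dim (UNIV :: (real^'n) set) \<le> card B" using dim_le_card[of UNIV B] fin by auto
    then show False using cB by simp
  qed
  then obtain x where x: "x \<notin> span B" by auto
  define z where "z = x - (\<Sum>b\<in>B. (x \<bullet> b) *\<^sub>R b)"
  have "z \<noteq> 0"
  proof
    assume "z = 0"
    then have "x = (\<Sum>b\<in>B. (x \<bullet> b) *\<^sub>R b)" by (simp add: z_def)
    moreover have "(\<Sum>b\<in>B. (x \<bullet> b) *\<^sub>R b) \<in> span B"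
      by (intro span_sum span_scale span_base)
    ultimately show False using x by simp
  qed
  moreover have "z \<in> V" unfolding V_def
  proof (intro CollectI ballI)
    fix b0 assume b0: "b0 \<in> B"
    have "(\<Sum>b\<in>B. (x \<bullet> b) * (b \<bullet> b0)) = (\<Sum>b\<in>B. if b = b0 then x \<bullet> b0 else 0)"
    proof (rule sum.cong)
      fix b assume "b \<in> B"
      then show "(x \<bullet> b) * (b \<bullet> b0) = (if b = b0 then x \<bullet> b0 else 0)"
        using B b0 by (auto simp: oes_def norm_eq_1)
    qed simp
    also have "\<dots> = x \<bullet> b0" using fin b0 by simp
    finally show "z \<bullet> b0 = 0"
      by (simp add: z_def inner_diff_left inner_sum_left)
  qed
  ultimately obtain u where "u \<in> V" "norm u = 1" "\<exists>\<mu>. A *v u = \<mu> *\<^sub>R u"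
    using eig_max[OF sym V inv] by blast
  then show ?thesis by (auto simp: V_def)
qed

lemma eig_build:
  fixes A :: "real^'n::finite^'n"
  assumes sym: "sym_mat A"
  shows "k \<le> CARD('n) \<Longrightarrow> \<exists>B. oes A B \<and> card B = k"
proof (induction k)
  case 0
  then show ?case by (intro exI[of _ "{}"]) (simp add: oes_def)
next
  case (Suc k)
  then obtain B where B: "oes A B" "card B = k" by auto
  then obtain u where u: "norm u = 1" "\<exists>\<mu>. A *v u = \<mu> *\<^sub>R u" "\<forall>b\<in>B. u \<bullet> b = 0"
    using eig_ext[OF sym B(1)] Suc.prems by auto
  have "u \<notin> B"
  proof
    assume "u \<in> B"
    then have "u \<bullet> u = 0" using u by auto
    then show False using u by (simp add: norm_eq_1)
  qed
  have fin: "finite B" using B by (simp add: oes_def)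
  have "oes A (insert u B)"
    using B(1) u by (auto simp: oes_def inner_commute)
  moreover have "card (insert u B) = Suc k" using fin \<open>u \<notin> B\<close> B by simp
  ultimately show ?case by blast
qed

lemma spectral:
  fixes A :: "real^'n::finite^'n"
  assumes sym: "sym_mat A"
  shows "\<exists>P d. transpose P ** P = mat 1 \<and> P ** transpose P = mat 1 \<and> A = fc P d"
proof -
  obtain B where B: "oes A B" "card B = CARD('n)" using eig_build[OF sym] by blast
  have fin: "finite B" using B by (simp add: oes_def)
  obtain f where f: "bij_betw f (UNIV :: 'n set) B"
    using finite_same_card_bij[of "UNIV :: 'n set" B] fin B by auto
  have fB: "f j \<in> B" for j using f by (auto simp: bij_betw_def)
  have finj: "f i = f j \<Longrightarrow> i = j" for i j using f by (auto simp: bij_betw_def inj_on_def)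
  define P :: "real^'n^'n" where "P = (\<chi> i j. f j $ i)"
  have col: "column j P = f j" for j by (simp add: P_def column_def vec_eq_iff)
  have orth: "f i \<bullet> f j = 0" if "i \<noteq> j" for i j
  proof -
    have "f i \<noteq> f j" using finj that by blast
    then show ?thesis using B(1) fB unfolding oes_def by blast
  qed
  have "orthogonal_matrix P"
    unfolding orthogonal_matrix_orthonormal_columns col
    using B(1) fB orth by (auto simp: oes_def orthogonal_def)
  then have o1: "transpose P ** P = mat 1" and o2: "P ** transpose P = mat 1"
    by (auto simp: orthogonal_matrix_def)
  define d where "d j = f j \<bullet> (A *v f j)" for j
  have eig: "A *v f j = d j *\<^sub>R f j" for j
  proof -
    obtain \<mu> where m: "A *v f j = \<mu> *\<^sub>R f j" using B(1) fB[of j] unfolding oes_def by blast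
    have "f j \<bullet> f j = 1" using B(1) fB[of j] by (auto simp: oes_def norm_eq_1)
    then have "d j = \<mu>" by (simp add: d_def m)
    then show ?thesis using m by simp
  qed
  have AP: "A ** P = P ** diag d"
  proof -
    have "(A ** P) $ i $ j = (A *v f j) $ i" for i j
      by (simp add: matrix_matrix_mult_def matrix_vector_mult_def P_def)
    moreover have "(P ** diag d) $ i $ j = (d j *\<^sub>R f j) $ i" for i j
    proof -
      have "(\<Sum>k\<in>UNIV. f k $ i * (if k = j then d k else 0)) = (\<Sum>k\<in>UNIV. if k = j then f j $ i * d j else 0)"
        by (rule sum.cong) auto
      then have "(P ** diag d) $ i $ j = (\<Sum>k\<in>UNIV. if k = j then f j $ i * d j else 0)"
        by (simp add: matrix_matrix_mult_def P_def diag_def)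
      then show ?thesis by simp
    qed
    ultimately show ?thesis using eig by (simp add: vec_eq_iff)
  qed
  have "A = A ** (P ** transpose P)" using o2 by simp
  also have "\<dots> = fc P d" by (simp add: matrix_mul_assoc AP fc_def)
  finally show ?thesis using o1 o2 by blast
qed

lemma sym_diff: "sym_mat A \<Longrightarrow> sym_mat B \<Longrightarrow> sym_mat (A - B)"
  by (simp add: sym_mat_def transpose_def vec_eq_iff)
lemma sym_add: "sym_mat A \<Longrightarrow> sym_mat B \<Longrightarrow> sym_mat (A + B)"
  by (simp add: sym_mat_def transpose_def vec_eq_iff)
lemma sym_scale: "sym_mat A \<Longrightarrow> sym_mat (c *\<^sub>R A)"
  by (simp add: sym_mat_def transpose_scalar)

lemma fc_eigvec:
  fixes P :: "real^'n::finite^'n"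
  assumes o1: "transpose P ** P = mat 1"
  shows "norm (P *v axis k 1) = 1 \<and> fc P d *v (P *v axis k 1) = d k *\<^sub>R (P *v axis k 1)"
proof -
  have n: "norm (P *v axis k 1) = 1" using orth_norm[OF o1] by simp
  have "diag d *v axis k 1 = d k *\<^sub>R axis k (1::real)"
    by (simp add: diag_vec vec_eq_iff axis_def)
  moreover have "transpose P *v (P *v axis k 1) = axis k 1"
    by (simp add: matrix_vector_mul_assoc o1)
  ultimately have "fc P d *v (P *v axis k 1) = P *v (d k *\<^sub>R axis k 1)"
    by (simp add: fc_vec)
  then show ?thesis using n by (simp add: matrix_vector_mult_scaleR)
qed

lemma pd_lower:
  fixes Q :: "real^'n::finite^'n"
  assumes "pd_mat Q"
  shows "\<exists>c>0. \<forall>x. c * (norm x)^2 \<le> x \<bullet> (Q *v x)"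
proof -
  obtain P d where o1: "transpose P ** P = mat 1" and o2: "P ** transpose P = mat 1"
    and Q: "Q = fc P d"
    using spectral[of Q] assms by (auto simp: pd_mat_def)
  have dpos: "d k > 0" for k
  proof -
    define v where "v = P *v axis k 1"
    have v: "norm v = 1" "Q *v v = d k *\<^sub>R v" using fc_eigvec[OF o1, of k d] Q by (auto simp: v_def)
    then have "v \<noteq> 0" by auto
    then have "0 < v \<bullet> (Q *v v)" using assms by (auto simp: pd_mat_def)
    also have "v \<bullet> (Q *v v) = d k" using v by (simp add: norm_eq_1)
    finally show ?thesis .
  qed
  define c where "c = Min (range d)"
  have "c \<in> range d" unfolding c_def by (rule Min_in) auto
  then have "c > 0" using dpos by auto
  moreover have "c \<le> d k" for k unfolding c_def by (rule Min_le) auto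
  then have "\<forall>x. c * (norm x)^2 \<le> x \<bullet> (Q *v x)"
    using fc_lower[OF o1 o2] Q by blast
  ultimately show ?thesis by blast
qed

lemma sqrt_stab:
  fixes R Q :: "real^'n::finite^'n"
  assumes R: "pd_mat R" and Qs: "sym_mat Q" and c: "c > 0"
    and Qc: "\<And>x. c * (norm x)^2 \<le> x \<bullet> (Q *v x)"
    and K: "\<And>y. \<bar>y \<bullet> ((R ** R - Q ** Q) *v y)\<bar> \<le> K * (norm y)^2"
  shows "norm ((R - Q) *v x) \<le> (K / c) * norm x"
proof -
  have Rs: "sym_mat R" using R by (simp add: pd_mat_def)
  obtain P \<mu> where o1: "transpose P ** P = mat 1" and o2: "P ** transpose P = mat 1"
    and D: "R - Q = fc P \<mu>"
    using spectral[OF sym_diff[OF Rs Qs]] by blast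
  have "\<bar>\<mu> k\<bar> \<le> K / c" for k
  proof -
    define v where "v = P *v axis k 1"
    have v: "norm v = 1" "(R - Q) *v v = \<mu> k *\<^sub>R v" using fc_eigvec[OF o1, of k \<mu>] D by (auto simp: v_def)
    have vv: "v \<bullet> v = 1" using v by (simp add: norm_eq_1)
    have Rv: "R *v v = Q *v v + \<mu> k *\<^sub>R v" using v(2) by (simp add: matrix_vector_mult_diff_rdistrib algebra_simps)
    define q where "q = v \<bullet> (Q *v v)"
    have qc: "c \<le> q" using Qc[of v] v by (simp add: q_def)
    have "v \<noteq> 0" using v by auto
    then have "0 < v \<bullet> (R *v v)" using R by (auto simp: pd_mat_def)
    then have r: "0 < q + \<mu> k" using vv by (simp add: Rv q_def inner_add_right)
    have "v \<bullet> ((R ** R - Q ** Q) *v v) = (R *v v) \<bullet> (R *v v) - (Q *v v) \<bullet> (Q *v v)"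
      using sym_inner[OF Rs, of v "R *v v"] sym_inner[OF Qs, of v "Q *v v"]
      by (simp add: matrix_vector_mult_diff_rdistrib matrix_vector_mul_assoc[symmetric] inner_diff_right)
    also have "\<dots> = \<mu> k * (q + (q + \<mu> k))"
      using vv by (simp add: Rv q_def inner_add_left inner_add_right inner_commute algebra_simps)
    finally have "\<bar>\<mu> k * (q + (q + \<mu> k))\<bar> \<le> K" using K[of v] v by simp
    then have "\<bar>\<mu> k\<bar> * (q + (q + \<mu> k)) \<le> K" using r qc c by (simp add: abs_mult)
    moreover have "\<bar>\<mu> k\<bar> * c \<le> \<bar>\<mu> k\<bar> * (q + (q + \<mu> k))"
      using r qc by (intro mult_left_mono) auto
    ultimately have "\<bar>\<mu> k\<bar> * c \<le> K" by linarith
    then show ?thesis using c by (simp add: pos_le_divide_eq)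
  qed
  then show ?thesis using fc_bound[OF o1 o2] D by metis
qed

lemma sqrt_unique:
  fixes R Q :: "real^'n::finite^'n"
  assumes "pd_mat R" "pd_mat Q" "R ** R = Q ** Q"
  shows "R = Q"
proof -
  obtain c where c: "c > 0" "\<And>x. c * (norm x)^2 \<le> x \<bullet> (Q *v x)" using pd_lower[OF assms(2)] by blast
  have "norm ((R - Q) *v x) \<le> (0 / c) * norm x" for x
    by (rule sqrt_stab[OF assms(1) _ c]) (use assms in \<open>auto simp: pd_mat_def\<close>)
  then have "(R - Q) *v x = 0" for x by simp
  then show ?thesis by (simp add: matrix_eq matrix_vector_mult_diff_rdistrib)
qed

lemma inv_bound:
  fixes X W :: "real^'n::finite^'n"
  assumes XW: "X ** W = mat 1" and c: "c > 0" and Xc: "\<And>x. c * (norm x)^2 \<le> x \<bullet> (X *v x)"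
  shows "norm (W *v y) \<le> norm y / c"
proof -
  define x where "x = W *v y"
  have "X *v x = y" by (simp add: x_def matrix_vector_mul_assoc XW)
  then have "c * (norm x)^2 \<le> x \<bullet> y" using Xc[of x] by simp
  also have "\<dots> \<le> norm x * norm y" by (rule Cauchy_Schwarz_ineq2[THEN order_trans[OF abs_ge_self]])
  finally have "c * norm x * norm x \<le> norm y * norm x" by (simp add: power2_eq_square ac_simps)
  then have "c * norm x \<le> norm y"
    by (cases "norm x = 0") (auto simp: mult_le_cancel_right)
  then show ?thesis using c by (simp add: x_def pos_le_divide_eq mult.commute)
qed

lemma inv_eq:
  fixes X W :: "real^'n::finite^'n"
  assumes XW: "X ** W = mat 1"
  shows "invertible X \<and> matrix_inv X = W \<and> W ** X = mat 1"
proof -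
  have WX: "W ** X = mat 1" using XW matrix_left_right_inverse by blast
  then have inv: "invertible X" using XW by (auto simp: invertible_def)
  define M where "M = matrix_inv X"
  have M: "X ** M = mat 1 \<and> M ** X = mat 1"
    unfolding M_def matrix_inv_def by (rule someI[of _ W]) (use XW WX in auto)
  have "M = M ** (X ** W)" by (simp add: XW)
  also have "\<dots> = W" by (simp add: matrix_mul_assoc M)
  finally show ?thesis using inv WX by (simp add: M_def)
qed

lemma mat_norm_bound:
  fixes M :: "real^'n::finite^'m::finite"
  assumes "\<And>x. norm (M *v x) \<le> K * norm x"
  shows "norm M \<le> real CARD('m) * real CARD('n) * K"
proof -
  have comp: "\<bar>M $ i $ j\<bar> \<le> K" for i j
  proof -
    have "M $ i $ j = (M *v axis j 1) $ i"
      by (simp add: matrix_vector_mult_def axis_def if_distrib cong: if_cong)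
    also have "\<bar>\<dots>\<bar> \<le> norm (M *v axis j 1)" by (rule component_le_norm_cart)
    also have "\<dots> \<le> K" using assms[of "axis j 1"] by simp
    finally show ?thesis .
  qed
  have "norm M \<le> (\<Sum>i\<in>UNIV. norm (M $ i))"
    unfolding norm_vec_def by (rule L2_set_le_sum) simp
  also have "\<dots> \<le> (\<Sum>i\<in>(UNIV::'m set). \<Sum>j\<in>(UNIV::'n set). \<bar>M $ i $ j\<bar>)"
    by (rule sum_mono) (rule norm_le_l1_cart)
  also have "\<dots> \<le> (\<Sum>i\<in>(UNIV::'m set). \<Sum>j\<in>(UNIV::'n set). K)"
    by (intro sum_mono comp)
  also have "\<dots> = real CARD('m) * real CARD('n) * K" by simp
  finally show ?thesis .
qed

lemma per_l:
  fixes S T :: "real^'n::finite^'n"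
  assumes Ss: "sym_mat S" and Ts: "sym_mat T" and l: "l > 0"
  shows "\<exists>R. pd_mat R \<and> R ** R = inner_mat S T l \<and> mat_sqrt (inner_mat S T l) = R
     \<and> (\<exists>!R. pd_mat R \<and> R ** R = inner_mat S T l)
     \<and> pre_omega S T l = R + (1/2) *\<^sub>R (S - l *\<^sub>R T)
     \<and> pre_omega S T l ** Omega_Ia S T l = mat 1
     \<and> invertible (pre_omega S T l) \<and> pd_mat (Omega_Ia S T l)
     \<and> Omega_Ia S T l = (1/l) *\<^sub>R R - (1/(2*l)) *\<^sub>R (S - l *\<^sub>R T)
     \<and> pd_mat ((1/l) *\<^sub>R R)"
proof -
  define A where "A = S - l *\<^sub>R T"
  have As: "sym_mat A" unfolding A_def by (intro sym_diff sym_scale Ss Ts)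
  obtain P d where o1: "transpose P ** P = mat 1" and o2: "P ** transpose P = mat 1"
    and Ad: "A = fc P d" using spectral[OF As] by blast
  define s where "s k = sqrt (l + (d k)^2 / 4)" for k
  have ss: "s k * s k = l + (1/4) * (d k * d k)" for k
    using l by (simp add: s_def power2_eq_square add_nonneg_nonneg)
  have spos: "s k > 0" for k using l by (simp add: s_def add_pos_nonneg)
  have sgt: "s k > \<bar>d k\<bar> / 2" for k
  proof -
    have "(\<bar>d k\<bar>/2)^2 < (s k)^2" using ss[of k] l by (simp add: power2_eq_square abs_mult_self_eq)
    then show ?thesis using spos[of k] power_less_imp_less_base[of "\<bar>d k\<bar>/2" 2 "s k"] by simp
  qed
  define R where "R = fc P s"
  have Rpd: "pd_mat R" unfolding R_def by (rule fc_pd[OF o1 o2 spos])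
  have RR: "R ** R = inner_mat S T l"
  proof -
    have "R ** R = fc P (\<lambda>k. s k * s k)" by (simp add: R_def fc_mult[OF o1])
    also have "\<dots> = fc P (\<lambda>k. l + (1/4) * (d k * d k))" by (simp add: ss)
    also have "\<dots> = fc P (\<lambda>k. l) + (1/4) *\<^sub>R fc P (\<lambda>k. d k * d k)"
      using fc_add[of P "\<lambda>k. l" "\<lambda>k. (1/4) * (d k * d k)"] fc_scale[of P "1/4" "\<lambda>k. d k * d k"] by simp
    also have "\<dots> = l *\<^sub>R mat 1 + (1/4) *\<^sub>R (A ** A)"
      by (simp add: fc_const[OF o2] Ad fc_mult[OF o1])
    finally show ?thesis by (simp add: inner_mat_def A_def)
  qed
  have uniq: "R' = R" if "pd_mat R' \<and> R' ** R' = inner_mat S T l" for R'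
    using sqrt_unique[of R' R] that Rpd RR by simp
  have msq: "mat_sqrt (inner_mat S T l) = R"
    unfolding mat_sqrt_def
  proof (rule the_equality)
    show "pd_mat R \<and> R ** R = inner_mat S T l" using Rpd RR by simp
    fix R' assume "pd_mat R' \<and> R' ** R' = inner_mat S T l"
    then show "R' = R" by (rule uniq)
  qed
  have ex1: "\<exists>!R. pd_mat R \<and> R ** R = inner_mat S T l"
  proof (rule ex1I[of _ R])
    show "pd_mat R \<and> R ** R = inner_mat S T l" using Rpd RR by simp
    fix R' assume "pd_mat R' \<and> R' ** R' = inner_mat S T l"
    then show "R' = R" by (rule uniq)
  qed
  define g where "g k = s k + (1/2) * d k" for k
  have gpos: "g k > 0" for k using sgt[of k] by (simp add: g_def abs_less_iff)
  have X: "pre_omega S T l = fc P g"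
    using fc_add[of P s "\<lambda>k. (1/2) * d k"] fc_scale[of P "1/2" d]
    by (simp add: pre_omega_def msq R_def A_def[symmetric] Ad g_def[abs_def])
  define W where "W = fc P (\<lambda>k. 1 / g k)"
  have XW: "fc P g ** W = mat 1"
  proof -
    have "fc P g ** W = fc P (\<lambda>k. 1)" using gpos
      by (simp add: W_def fc_mult[OF o1] less_imp_neq[symmetric])
    then show ?thesis by (simp add: fc_const[OF o2])
  qed
  have IE: "invertible (fc P g) \<and> matrix_inv (fc P g) = W" using inv_eq[OF XW] by blast
  have Om: "Omega_Ia S T l = W" using IE X by (simp add: Omega_Ia_def)
  have Wpd: "pd_mat W" unfolding W_def by (rule fc_pd[OF o1 o2]) (use gpos in simp)
  have W2: "W = (1/l) *\<^sub>R R - (1/(2*l)) *\<^sub>R A"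
  proof -
    have e: "1 / g k = (1/l) * s k - (1/(2*l)) * d k" for k
    proof -
      have "g k * ((1/l) * s k - (1/(2*l)) * d k) = (s k * s k - (1/4)*(d k * d k)) / l"
        using l by (simp add: g_def field_simps)
      also have "\<dots> = 1" using ss[of k] l by simp
      finally show ?thesis using gpos[of k] by (simp add: field_simps)
    qed
    have "W = fc P (\<lambda>k. (1/l) * s k - (1/(2*l)) * d k)" by (simp add: W_def e)
    also have "\<dots> = (1/l) *\<^sub>R R - (1/(2*l)) *\<^sub>R A"
      using fc_diff[of P "\<lambda>k. (1/l) * s k" "\<lambda>k. (1/(2*l)) * d k"] fc_scale[of P "1/l" s] fc_scale[of P "1/(2*l)" d]
      by (simp add: R_def Ad)
    finally show ?thesis .
  qed
  have R'pd: "pd_mat ((1/l) *\<^sub>R R)"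
    using fc_pd[OF o1 o2, of "\<lambda>k. (1/l) * s k"] fc_scale[of P "1/l" s] spos l by (simp add: R_def)
  have X2: "pre_omega S T l = R + (1/2) *\<^sub>R A" by (simp add: pre_omega_def msq A_def)
  have a1: "pre_omega S T l = R + (1/2) *\<^sub>R (S - l *\<^sub>R T)" using X2 by (simp add: A_def)
  have a2: "pre_omega S T l ** Omega_Ia S T l = mat 1" using XW X Om by simp
  have a3: "invertible (pre_omega S T l)" using IE X by simp
  have a4: "pd_mat (Omega_Ia S T l)" using Wpd Om by simp
  have a5: "Omega_Ia S T l = (1/l) *\<^sub>R R - (1/(2*l)) *\<^sub>R (S - l *\<^sub>R T)" using Om W2 by (simp add: A_def)
  show ?thesis
    apply (rule exI[of _ R])
    using Rpd RR msq ex1 a1 a2 a3 a4 a5 R'pd by blast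
qed

lemma sq_sym: "sym_mat M \<Longrightarrow> y \<bullet> ((M ** M) *v y) = (M *v y) \<bullet> (M *v y)"
  by (simp add: matrix_vector_mul_assoc[symmetric] sym_inner)

lemma quad_inner:
  fixes S T :: "real^'n::finite^'n"
  assumes Ss: "sym_mat S" and Ts: "sym_mat T"
  shows "y \<bullet> (inner_mat S T l *v y) = l * (y \<bullet> y) + (1/4) * ((S *v y) \<bullet> (S *v y)
           - 2 * l * ((S *v y) \<bullet> (T *v y)) + l^2 * ((T *v y) \<bullet> (T *v y)))"
proof -
  define A where "A = S - l *\<^sub>R T"
  have As: "sym_mat A" unfolding A_def by (intro sym_diff sym_scale Ss Ts)
  have "inner_mat S T l *v y = l *\<^sub>R y + (1/4) *\<^sub>R (A *v (A *v y))"
    unfolding inner_mat_def A_def[symmetric]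
    by (simp add: matrix_vector_mult_add_rdistrib scaleR_matrix_vector_assoc[symmetric] matrix_vector_mul_assoc[symmetric])
  then have "y \<bullet> (inner_mat S T l *v y) = l * (y \<bullet> y) + (1/4) * ((A *v y) \<bullet> (A *v y))"
    by (simp add: inner_add_right sym_inner[OF As])
  moreover have "A *v y = S *v y - l *\<^sub>R (T *v y)"
    by (simp add: A_def matrix_vector_mult_diff_rdistrib scaleR_matrix_vector_assoc)
  ultimately show ?thesis
    by (simp add: inner_diff_left inner_diff_right inner_commute power2_eq_square algebra_simps)
qed

lemma cs: "\<bar>(u::real^'n) \<bullet> v\<bar> \<le> norm u * norm v" by (rule Cauchy_Schwarz_ineq2)

lemma pd_invertible:
  fixes S :: "real^'n::finite^'n"
  assumes "pd_mat S"
  shows "S ** matrix_inv S = mat 1"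
proof -
  have "\<forall>x. S *v x = 0 \<longrightarrow> x = 0"
  proof (intro allI impI)
    fix x assume "S *v x = 0"
    then have "x \<bullet> (S *v x) = 0" by simp
    then show "x = 0" using assms by (auto simp: pd_mat_def)
  qed
  then obtain B where "B ** S = mat 1" using matrix_left_invertible_ker by blast
  then have "S ** B = mat 1" using matrix_left_right_inverse by blast
  then show ?thesis using inv_eq by blast
qed

lemma lim0:
  fixes S T :: "real^'n::finite^'n"
  assumes Spd: "pd_mat S" and Ts: "sym_mat T"
  shows "(Omega_Ia S T \<longlongrightarrow> matrix_inv S) (at_right 0)"
proof -
  have Ss: "sym_mat S" using Spd by (simp add: pd_mat_def)
  obtain c where c: "c > 0" and Sc: "\<And>x. c * (norm x)^2 \<le> x \<bullet> (S *v x)" using pd_lower[OF Spd] by blast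
  obtain \<sigma>S where \<sigma>S: "\<sigma>S > 0" "\<And>x. norm (S *v x) \<le> norm x * \<sigma>S"
    using bounded_linear.pos_bounded[OF matrix_vector_mul_bounded_linear[of S]] by blast
  obtain \<sigma>T where \<sigma>T: "\<sigma>T > 0" "\<And>x. norm (T *v x) \<le> norm x * \<sigma>T"
    using bounded_linear.pos_bounded[OF matrix_vector_mul_bounded_linear[of T]] by blast
  define Si where "Si = matrix_inv S"
  have SSi: "S ** Si = mat 1" using pd_invertible[OF Spd] by (simp add: Si_def)
  have Sib: "norm (Si *v y) \<le> norm y / c" for y by (rule inv_bound[OF SSi c Sc])
  define M1 where "M1 = 1 + \<sigma>S * \<sigma>T / 2 + \<sigma>T^2 / 4"
  define M2 where "M2 = 2 * M1 / c + \<sigma>T / 2"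
  have M2: "M2 > 0" using \<sigma>S \<sigma>T c by (simp add: M2_def M1_def add_pos_pos)
  define Q where "Q = (1/2) *\<^sub>R S"
  have Qs: "sym_mat Q" by (simp add: Q_def sym_scale Ss)
  have Qv: "Q *v x = (1/2) *\<^sub>R (S *v x)" for x by (simp add: Q_def scaleR_matrix_vector_assoc)
  have Qc: "(c/2) * (norm x)^2 \<le> x \<bullet> (Q *v x)" for x using Sc[of x] by (simp add: Qv)
  have c2: "c/2 > 0" using c by simp
  have main: "norm (Omega_Ia S T l - Si) \<le> real CARD('n) * real CARD('n) * (2 * M2 / c^2 * l)"
    if l: "0 < l" "l \<le> 1" "l * M2 \<le> c/2" for l
  proof -
    obtain R where Rpd: "pd_mat R" and RR: "R ** R = inner_mat S T l"
      and X: "pre_omega S T l = R + (1/2) *\<^sub>R (S - l *\<^sub>R T)"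
      and XW: "pre_omega S T l ** Omega_Ia S T l = mat 1"
      using per_l[OF Ss Ts l(1)] by blast
    define X where "X = pre_omega S T l"
    define W where "W = Omega_Ia S T l"
    have Kb: "\<bar>y \<bullet> ((R ** R - Q ** Q) *v y)\<bar> \<le> (l * M1) * (norm y)^2" for y
    proof -
      define a where "a = norm y"
      define sy where "sy = norm (S *v y)"
      define ty where "ty = norm (T *v y)"
      have a0: "a \<ge> 0" by (simp add: a_def)
      have sy: "0 \<le> sy" "sy \<le> \<sigma>S * a" using \<sigma>S(2)[of y] by (auto simp: sy_def a_def mult.commute)
      have ty: "0 \<le> ty" "ty \<le> \<sigma>T * a" using \<sigma>T(2)[of y] by (auto simp: ty_def a_def mult.commute)
      have "y \<bullet> ((R ** R - Q ** Q) *v y) = y \<bullet> (inner_mat S T l *v y) - (Q *v y) \<bullet> (Q *v y)"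
        by (simp add: RR matrix_vector_mult_diff_rdistrib inner_diff_right sq_sym[OF Qs, symmetric])
      also have "\<dots> = l * (y \<bullet> y) - (l/2) * ((S *v y) \<bullet> (T *v y)) + (l^2/4) * ((T *v y) \<bullet> (T *v y))"
        by (simp add: quad_inner[OF Ss Ts] Qv algebra_simps)
      also have "\<dots> = l * a^2 - (l/2) * ((S *v y) \<bullet> (T *v y)) + (l^2/4) * ty^2"
        by (simp add: a_def ty_def power2_norm_eq_inner)
      finally have e: "y \<bullet> ((R ** R - Q ** Q) *v y) = l * a^2 - (l/2) * ((S *v y) \<bullet> (T *v y)) + (l^2/4) * ty^2" .
      have "\<bar>(S *v y) \<bullet> (T *v y)\<bar> \<le> sy * ty" unfolding sy_def ty_def by (rule cs)
      also have "\<dots> \<le> (\<sigma>S * a) * (\<sigma>T * a)" using sy ty by (intro mult_mono) auto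
      finally have st: "\<bar>(S *v y) \<bullet> (T *v y)\<bar> \<le> \<sigma>S * \<sigma>T * a^2" by (simp add: power2_eq_square ac_simps)
      have "ty^2 \<le> (\<sigma>T * a)^2" using ty by (intro power_mono) auto
      moreover have "l^2 \<le> l" using l by (simp add: power2_eq_square mult_le_cancel_left1)
      ultimately have tt: "l^2 * ty^2 \<le> l * (\<sigma>T^2 * a^2)"
        using l(1) by (intro mult_mono) (auto simp: power_mult_distrib)
      have "\<bar>y \<bullet> ((R ** R - Q ** Q) *v y)\<bar> \<le> l * a^2 + (l/2) * \<bar>(S *v y) \<bullet> (T *v y)\<bar> + (l^2/4) * ty^2"
      proof -
        define z where "z = (S *v y) \<bullet> (T *v y)"
        have h1: "\<bar>(l/2) * z\<bar> = (l/2) * \<bar>z\<bar>" using l by (simp add: abs_mult)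
        have h2: "0 \<le> l * a^2" "0 \<le> (l^2/4) * ty^2" using l by auto
        show ?thesis unfolding e z_def[symmetric] using h1 h2 by arith
      qed
      also have "\<dots> \<le> l * a^2 + (l/2) * (\<sigma>S * \<sigma>T * a^2) + (l * (\<sigma>T^2 * a^2))/4"
        using st tt l by (intro add_mono mult_left_mono) auto
      also have "\<dots> = (l * M1) * a^2" by (simp add: M1_def algebra_simps)
      finally show ?thesis by (simp add: a_def)
    qed
    have RQ: "norm ((R - Q) *v x) \<le> ((l * M1) / (c/2)) * norm x" for x
      by (rule sqrt_stab[OF Rpd Qs c2 Qc Kb])
    have XS: "(X - S) *v x = (R - Q) *v x - (l/2) *\<^sub>R (T *v x)" for x
      by (simp add: X_def X Q_def matrix_vector_mult_diff_rdistrib matrix_vector_mult_add_rdistrib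
          scaleR_matrix_vector_assoc[symmetric] vec_eq_iff algebra_simps)
    have XSb: "norm ((X - S) *v x) \<le> (l * M2) * norm x" for x
    proof -
      have "norm ((X - S) *v x) \<le> norm ((R - Q) *v x) + norm ((l/2) *\<^sub>R (T *v x))"
        unfolding XS by (rule norm_triangle_ineq4)
      also have "\<dots> \<le> ((l * M1) / (c/2)) * norm x + (l/2) * (norm x * \<sigma>T)"
        using RQ[of x] \<sigma>T(2)[of x] l by (intro add_mono) (auto intro: mult_left_mono)
      also have "\<dots> = (l * M2) * norm x" using c by (simp add: M2_def field_simps)
      finally show ?thesis .
    qed
    have Xc: "(c/2) * (norm x)^2 \<le> x \<bullet> (X *v x)" for x
    proof -
      have "x \<bullet> (X *v x) = x \<bullet> (S *v x) + x \<bullet> ((X - S) *v x)"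
        by (simp add: matrix_vector_mult_diff_rdistrib inner_diff_right)
      moreover have "\<bar>x \<bullet> ((X - S) *v x)\<bar> \<le> norm x * ((l * M2) * norm x)"
        using cs[of x "(X - S) *v x"] XSb[of x] by (meson mult_left_mono norm_ge_zero order_trans)
      moreover have "norm x * ((l * M2) * norm x) \<le> (c/2) * (norm x)^2"
      proof -
        have "(l * M2) * (norm x * norm x) \<le> (c/2) * (norm x * norm x)"
          using l(3) by (intro mult_right_mono) auto
        then show ?thesis by (simp add: power2_eq_square ac_simps)
      qed
      ultimately show ?thesis using Sc[of x] by (simp add: abs_le_iff)
    qed
    have XW': "X ** W = mat 1" using XW by (simp add: X_def W_def)
    have WX: "W ** X = mat 1" using inv_eq[OF XW'] by blast
    have Wb: "norm (W *v y) \<le> norm y / (c/2)" for y by (rule inv_bound[OF XW' c2 Xc])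
    have "norm ((W - Si) *v y) \<le> (2 * M2 / c^2 * l) * norm y" for y
    proof -
      have e1: "(S - X) *v (Si *v y) = y - (X ** Si) *v y"
      proof -
        have "S *v (Si *v y) = y" by (simp add: matrix_vector_mul_assoc SSi)
        moreover have "X *v (Si *v y) = (X ** Si) *v y" by (simp add: matrix_vector_mul_assoc)
        ultimately show ?thesis by (simp add: matrix_vector_mult_diff_rdistrib)
      qed
      have e2: "W *v ((X ** Si) *v y) = Si *v y"
        by (simp add: matrix_vector_mul_assoc matrix_mul_assoc WX)
      have eq: "(W - Si) *v y = W *v ((S - X) *v (Si *v y))"
        unfolding e1 matrix_vector_mult_diff_distrib e2 by (simp add: matrix_vector_mult_diff_rdistrib)
      have "norm ((S - X) *v z) = norm ((X - S) *v z)" for z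
        by (metis minus_diff_eq norm_minus_cancel matrix_vector_mult_diff_rdistrib)
      then have "norm ((W - Si) *v y) \<le> norm ((X - S) *v (Si *v y)) / (c/2)"
        using eq Wb by metis
      also have "\<dots> \<le> ((l * M2) * norm (Si *v y)) / (c/2)"
        using XSb c by (intro divide_right_mono) auto
      also have "\<dots> \<le> ((l * M2) * (norm y / c)) / (c/2)"
        using Sib l M2 c by (intro divide_right_mono mult_left_mono) auto
      also have "\<dots> = (2 * M2 / c^2 * l) * norm y" using c by (simp add: field_simps power2_eq_square)
      finally show ?thesis .
    qed
    then show ?thesis unfolding W_def by (rule mat_norm_bound)
  qed
  define N where "N = real CARD('n) * real CARD('n) * (2 * M2 / c^2)"
  have ev: "eventually (\<lambda>l. norm (Omega_Ia S T l - Si) \<le> N * l) (at_right 0)"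
    unfolding eventually_at_right_field
  proof (intro exI[of _ "min 1 (c / (2 * M2))"] conjI allI impI)
    show "0 < min 1 (c / (2 * M2))" using c M2 by simp
    fix l :: real assume "0 < l" "l < min 1 (c / (2 * M2))"
    then have "l \<le> 1" "l * M2 \<le> c/2" using M2 by (auto simp: field_simps)
    then show "norm (Omega_Ia S T l - Si) \<le> N * l"
      using main[OF \<open>0 < l\<close>] by (simp add: N_def ac_simps)
  qed
  have "((\<lambda>l. N * l) \<longlongrightarrow> N * 0) (at_right 0)" by (intro tendsto_intros)
  then have "((\<lambda>l. Omega_Ia S T l - Si) \<longlongrightarrow> 0) (at_right 0)"
    using Lim_null_comparison[OF ev] by simp
  then show ?thesis by (simp add: LIM_zero_iff Si_def)
qed

lemma limtop:
  fixes S T :: "real^'n::finite^'n"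
  assumes Ss: "sym_mat S" and Tpd: "pd_mat T"
  shows "(Omega_Ia S T \<longlongrightarrow> T) at_top"
proof -
  have Ts: "sym_mat T" using Tpd by (simp add: pd_mat_def)
  obtain c where c: "c > 0" and Tc: "\<And>x. c * (norm x)^2 \<le> x \<bullet> (T *v x)" using pd_lower[OF Tpd] by blast
  obtain \<sigma>S where \<sigma>S: "\<sigma>S > 0" "\<And>x. norm (S *v x) \<le> norm x * \<sigma>S"
    using bounded_linear.pos_bounded[OF matrix_vector_mul_bounded_linear[of S]] by blast
  obtain \<sigma>T where \<sigma>T: "\<sigma>T > 0" "\<And>x. norm (T *v x) \<le> norm x * \<sigma>T"
    using bounded_linear.pos_bounded[OF matrix_vector_mul_bounded_linear[of T]] by blast
  define N1 where "N1 = 1 + \<sigma>S^2 / 4 + \<sigma>S * \<sigma>T / 2"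
  define N2 where "N2 = 2 * N1 / c + \<sigma>S / 2"
  define Q where "Q = (1/2) *\<^sub>R T"
  have Qs: "sym_mat Q" by (simp add: Q_def sym_scale Ts)
  have Qv: "Q *v x = (1/2) *\<^sub>R (T *v x)" for x by (simp add: Q_def scaleR_matrix_vector_assoc)
  have Qc: "(c/2) * (norm x)^2 \<le> x \<bullet> (Q *v x)" for x using Tc[of x] by (simp add: Qv)
  have c2: "c/2 > 0" using c by simp
  have main: "norm (Omega_Ia S T l - T) \<le> real CARD('n) * real CARD('n) * (N2 * (1/l))"
    if l: "1 \<le> l" for l
  proof -
    have l0: "0 < l" using l by simp
    define u where "u = 1 / l"
    have u: "0 < u" "u \<le> 1" "l * u = 1" using l by (auto simp: u_def)
    obtain R where RR: "R ** R = inner_mat S T l"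
      and Om: "Omega_Ia S T l = (1/l) *\<^sub>R R - (1/(2*l)) *\<^sub>R (S - l *\<^sub>R T)"
      and R'pd: "pd_mat ((1/l) *\<^sub>R R)"
      using per_l[OF Ss Ts l0] by blast
    define R' where "R' = u *\<^sub>R R"
    have R'pd': "pd_mat R'" using R'pd by (simp add: R'_def u_def)
    have Kb: "\<bar>y \<bullet> ((R' ** R' - Q ** Q) *v y)\<bar> \<le> (u * N1) * (norm y)^2" for y
    proof -
      define a where "a = norm y"
      define sy where "sy = norm (S *v y)"
      define ty where "ty = norm (T *v y)"
      define z where "z = (S *v y) \<bullet> (T *v y)"
      have a0: "a \<ge> 0" by (simp add: a_def)
      have sy: "0 \<le> sy" "sy \<le> \<sigma>S * a" using \<sigma>S(2)[of y] by (auto simp: sy_def a_def mult.commute)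
      have ty: "0 \<le> ty" "ty \<le> \<sigma>T * a" using \<sigma>T(2)[of y] by (auto simp: ty_def a_def mult.commute)
      have R'R': "R' ** R' = (u * u) *\<^sub>R inner_mat S T l"
        by (simp add: R'_def matrix_scaleR_left matrix_scaleR_right RR)
      have "y \<bullet> ((R' ** R' - Q ** Q) *v y) = (u * u) * (y \<bullet> (inner_mat S T l *v y)) - (Q *v y) \<bullet> (Q *v y)"
        by (simp add: R'R' matrix_vector_mult_diff_rdistrib inner_diff_right sq_sym[OF Qs, symmetric]
            scaleR_matrix_vector_assoc[symmetric])
      also have "\<dots> = (u * u) * (l * a^2 + (1/4) * (sy^2 - 2 * l * z + l^2 * ty^2)) - (1/4) * ty^2"
        by (simp add: quad_inner[OF Ss Ts] Qv a_def sy_def ty_def z_def power2_norm_eq_inner)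
      also have "\<dots> = u * a^2 + (u*u/4) * sy^2 - (u/2) * z"
        using l0 by (simp add: u_def field_simps power2_eq_square)
      finally have e: "y \<bullet> ((R' ** R' - Q ** Q) *v y) = u * a^2 + (u*u/4) * sy^2 - (u/2) * z" .
      have "\<bar>z\<bar> \<le> sy * ty" unfolding sy_def ty_def z_def by (rule cs)
      also have "\<dots> \<le> (\<sigma>S * a) * (\<sigma>T * a)" using sy ty by (intro mult_mono) auto
      finally have st: "\<bar>z\<bar> \<le> \<sigma>S * \<sigma>T * a^2" by (simp add: power2_eq_square ac_simps)
      have "sy^2 \<le> (\<sigma>S * a)^2" using sy by (intro power_mono) auto
      moreover have "u * u \<le> u" using u by (simp add: mult_le_cancel_left1)
      ultimately have ss: "(u * u) * sy^2 \<le> u * (\<sigma>S^2 * a^2)"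
        using u(1) by (intro mult_mono) (auto simp: power_mult_distrib)
      have "\<bar>y \<bullet> ((R' ** R' - Q ** Q) *v y)\<bar> \<le> u * a^2 + (u*u/4) * sy^2 + (u/2) * \<bar>z\<bar>"
      proof -
        have h1: "\<bar>(u/2) * z\<bar> = (u/2) * \<bar>z\<bar>" using u by (simp add: abs_mult)
        have h2: "0 \<le> u * a^2" "0 \<le> (u*u/4) * sy^2" using u by auto
        show ?thesis unfolding e using h1 h2 by arith
      qed
      also have "\<dots> \<le> u * a^2 + (u * (\<sigma>S^2 * a^2))/4 + (u/2) * (\<sigma>S * \<sigma>T * a^2)"
        using st ss u by (intro add_mono mult_left_mono) auto
      also have "\<dots> = (u * N1) * a^2" by (simp add: N1_def algebra_simps)
      finally show ?thesis by (simp add: a_def)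
    qed
    have RQ: "norm ((R' - Q) *v x) \<le> ((u * N1) / (c/2)) * norm x" for x
      by (rule sqrt_stab[OF R'pd' Qs c2 Qc Kb])
    have OT: "(Omega_Ia S T l - T) *v x = (R' - Q) *v x - (u/2) *\<^sub>R (S *v x)" for x
    proof -
      have "(1/(2*l)) * l = 1/2" using l0 by simp
      then show ?thesis
        by (simp add: Om R'_def u_def Q_def matrix_vector_mult_diff_rdistrib matrix_vector_mult_add_rdistrib
          scaleR_matrix_vector_assoc[symmetric] vec_eq_iff algebra_simps)
    qed
    have "norm ((Omega_Ia S T l - T) *v x) \<le> (N2 * (1/l)) * norm x" for x
    proof -
      have "norm ((Omega_Ia S T l - T) *v x) \<le> norm ((R' - Q) *v x) + norm ((u/2) *\<^sub>R (S *v x))"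
        unfolding OT by (rule norm_triangle_ineq4)
      also have "\<dots> \<le> ((u * N1) / (c/2)) * norm x + (u/2) * (norm x * \<sigma>S)"
        using RQ[of x] \<sigma>S(2)[of x] u by (intro add_mono) (auto intro: mult_left_mono)
      also have "\<dots> = (N2 * (1/l)) * norm x" using c l0 by (simp add: N2_def u_def field_simps)
      finally show ?thesis .
    qed
    then show ?thesis by (rule mat_norm_bound)
  qed
  define N where "N = real CARD('n) * real CARD('n) * N2"
  have ev: "eventually (\<lambda>l. norm (Omega_Ia S T l - T) \<le> N * inverse l) at_top"
    unfolding eventually_at_top_linorder
    using main by (auto intro!: exI[of _ 1] simp: N_def divide_inverse ac_simps)
  have "((\<lambda>l. N * inverse l) \<longlongrightarrow> N * 0) at_top"
    by (intro tendsto_intros tendsto_inverse_0_at_top filterlim_ident)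
  then have "((\<lambda>l. Omega_Ia S T l - T) \<longlongrightarrow> 0) at_top"
    using Lim_null_comparison[OF ev] by simp
  then show ?thesis by (simp add: LIM_zero_iff)
qed

lemma pd_sq:
  fixes R :: "real^'n::finite^'n"
  assumes "pd_mat R"
  shows "pd_mat (R ** R)"
  unfolding pd_mat_def
proof (intro conjI allI impI)
  have Rs: "sym_mat R" using assms by (simp add: pd_mat_def)
  then show "sym_mat (R ** R)" by (simp add: sym_mat_def matrix_transpose_mul)
  fix x :: "real^'n" assume "x \<noteq> 0"
  then have "0 < x \<bullet> (R *v x)" using assms by (simp add: pd_mat_def)
  then have "R *v x \<noteq> 0" by auto
  then show "0 < x \<bullet> ((R ** R) *v x)" by (simp add: sq_sym[OF Rs])
qed

theorem proposition1:
  fixes S T :: "real^'n^'n"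
  assumes S: "psd_mat S" and T: "pd_mat T"
  shows "(\<forall>l>0. pd_mat (inner_mat S T l)
                \<and> (\<exists>!R. pd_mat R \<and> R ** R = inner_mat S T l)
                \<and> invertible (pre_omega S T l)
                \<and> pd_mat (Omega_Ia S T l))
       \<and> (pd_mat S \<longrightarrow> (Omega_Ia S T \<longlongrightarrow> matrix_inv S) (at_right 0))
       \<and> (Omega_Ia S T \<longlongrightarrow> T) at_top"
proof -
  have Ss: "sym_mat S" using S by (simp add: psd_mat_def)
  have Ts: "sym_mat T" using T by (simp add: pd_mat_def)
  have i: "pd_mat (inner_mat S T l) \<and> (\<exists>!R. pd_mat R \<and> R ** R = inner_mat S T l)
                \<and> invertible (pre_omega S T l) \<and> pd_mat (Omega_Ia S T l)" if l: "l > 0" for l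
  proof -
    obtain R where "pd_mat R" "R ** R = inner_mat S T l" "\<exists>!R. pd_mat R \<and> R ** R = inner_mat S T l"
      "invertible (pre_omega S T l)" "pd_mat (Omega_Ia S T l)"
      using per_l[OF Ss Ts l] by blast
    then show ?thesis using pd_sq by metis
  qed
  show ?thesis using i lim0[OF _ Ts] limtop[OF Ss T] by blast
qed

end
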